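(* Let $n\ge 1$ and let $G_1=(s_1,\dots,s_{2n})$ and $G_2=(t_1,\dots,t_{2n})$ be ordered Gauss codes of alternating OGC knot diagrams with $n$ crossings, whose first halves are both equal to $(1,-2,3,-4,\dots,(-1)^{n+1}n)$. Let $G_1'=(s_{n+1},\dots,s_{2n})$ and $G_2'=(t_{n+1},\dots,t_{2n})$ be their second halves, and define the product as the concatenation $P=(s_{n+1},\dots,s_{2n},-t_{n+1},\dots,-t_{2n})$. Then $P$ can be transformed into an ordered Gauss code, i.e., the absolute values of the first $n$ entries of $P$ are $n$ distinct elements of $\{1,\dots,n\}$, so that after relabelling the crossings (applying a permutation of $\{1,\dots,n\}$ to absolute values, keeping signs) $P$ becomes a sequence of length $2n$ whose first $n$ entries have absolute values $1,2,\dots,n$ in order.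
   Context: A Gauss code of a knot diagram with $n$ crossings is a sequence of $2n$ nonzero integers obtained by choosing a base point and orientation, labelling the crossings by $1,\dots,n$, and recording the labels of the crossings met along the traversal, with sign indicating over- or under-passage; each label appears exactly twice, once with each sign. A Gauss code is ordered if the absolute values of its first $n$ entries are $1,2,\dots,n$ in this order. An OGC diagram is a knot diagram admitting an ordered Gauss code. *)

theory Defs
  imports Main
begin

definition gauss_code :: "nat \<Rightarrow> int list \<Rightarrow> bool" where
  "gauss_code n G \<longleftrightarrow> length G = 2 * n \<and>
     (\<forall>x \<in> set G. x \<noteq> 0 \<and> \<bar>x\<bar> \<le> int n) \<and>
     (\<forall>i \<in> {1..n}. count_list G (int i) = 1 \<and> count_list G (- int i) = 1)"

definition ordered_gauss_code :: "nat \<Rightarrow> int list \<Rightarrow> bool" where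
  "ordered_gauss_code n G \<longleftrightarrow> gauss_code n G \<and>
     map abs (take n G) = map int [1..<n+1]"

text \<open>Alternating diagram: over- and under-passages alternate along the (closed) traversal,
  i.e. cyclically consecutive entries have opposite signs.\<close>
definition alternating_code :: "int list \<Rightarrow> bool" where
  "alternating_code G \<longleftrightarrow>
     (\<forall>i < length G. sgn (G ! i) \<noteq> sgn (G ! ((i + 1) mod length G)))"

definition std_half :: "nat \<Rightarrow> int list" where
  "std_half n = map (\<lambda>k. (-1) ^ (k + 1) * int k) [1..<n+1]"

definition gauss_product :: "nat \<Rightarrow> int list \<Rightarrow> int list \<Rightarrow> int list" where
  "gauss_product n G1 G2 = drop n G1 @ map uminus (drop n G2)"

definition relabel :: "(nat \<Rightarrow> nat) \<Rightarrow> int list \<Rightarrow> int list" where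
  "relabel \<sigma> G = map (\<lambda>x. sgn x * int (\<sigma> (nat \<bar>x\<bar>))) G"

end

theory Submission
  imports Defs
begin

lemma cnt_le1_distinct: "(\<forall>x\<in>set xs. count_list xs x \<le> 1) \<Longrightarrow> distinct xs"
proof (induction xs)
  case Nil then show ?case by simp
next
  case (Cons y ys)
  have "count_list (y#ys) y \<le> 1" using Cons.prems by simp
  hence "y \<notin> set ys" by (simp add: count_list_0_iff)
  moreover have "\<forall>x\<in>set ys. count_list ys x \<le> 1"
  proof
    fix x assume x: "x \<in> set ys"
    have "count_list ys x \<le> count_list (y#ys) x" by simp
    also have "\<dots> \<le> 1" using Cons.prems x by simp
    finally show "count_list ys x \<le> 1" .
  qed
  ultimately show ?case using Cons.IH by simp
qed

lemma distinct_cnt: "distinct xs \<Longrightarrow> count_list xs x = (if x \<in> set xs then 1 else 0)"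
  by (induction xs) auto

lemma cnt_abs: "a > 0 \<Longrightarrow> count_list (map abs xs) (a::int) = count_list xs a + count_list xs (-a)"
proof (induction xs)
  case Nil then show ?case by simp
next
  case (Cons y ys)
  have "\<bar>y\<bar> = a \<longleftrightarrow> y = a \<or> y = -a" using Cons.prems by auto
  moreover have "\<not> (y = a \<and> y = -a)" using Cons.prems by auto
  ultimately show ?case using Cons by auto
qed

definition e :: "nat \<Rightarrow> int" where "e a = (-1) ^ (a + 1) * int a"

lemma abs_e: "\<bar>e a\<bar> = int a"
  by (simp add: e_def abs_mult)

lemma e_cases: "e a = int a \<or> e a = - int a"
  by (cases "even a") (auto simp: e_def)

lemma std_half_e: "std_half n = map e [1..<n+1]"
  by (simp add: std_half_def e_def)

lemma std_half_distinct: "distinct (std_half n)"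
proof -
  have "inj_on e {1..<n+1}"
    by (rule inj_onI) (metis abs_e of_nat_eq_iff)
  thus ?thesis by (simp add: std_half_e distinct_map del: upt_Suc)
qed

lemma std_half_mem: "a \<in> {1..n} \<Longrightarrow> e a \<in> set (std_half n)"
  by (auto simp: std_half_e simp del: upt_Suc)

lemma std_half_notmem: "a \<in> {1..n} \<Longrightarrow> - e a \<notin> set (std_half n)"
proof
  assume a: "a \<in> {1..n}" and "- e a \<in> set (std_half n)"
  hence "- e a \<in> e ` {1..<n+1}" by (simp add: std_half_e del: upt_Suc)
  then obtain k where k0: "k \<in> {1..<n+1}" "- e a = e k" by blast
  hence k: "k \<in> {1..n}" "- e a = e k" by auto
  hence "int a = int k" by (metis abs_e abs_minus_cancel)
  hence "k = a" by simp
  with k have "e a = 0" by simp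
  thus False using a abs_e[of a] by simp
qed

lemma drop_counts:
  assumes g: "gauss_code n G" and t: "take n G = std_half n" and a: "a \<in> {1..n}"
  shows "count_list (drop n G) (e a) = 0 \<and> count_list (drop n G) (- e a) = 1"
proof -
  have G: "G = take n G @ drop n G" by simp
  have c1: "count_list G (e a) = 1" "count_list G (- e a) = 1"
    using g a e_cases[of a] unfolding gauss_code_def by auto
  have "count_list (std_half n) (e a) = 1" "count_list (std_half n) (- e a) = 0"
    using std_half_mem[OF a] std_half_notmem[OF a] distinct_cnt[OF std_half_distinct] by auto
  moreover have "count_list G x = count_list (std_half n) x + count_list (drop n G) x" for x
  proof -
    have "count_list G x = count_list (take n G @ drop n G) x" by simp
    thus ?thesis unfolding count_list_append t .
  qed
  ultimately show ?thesis using c1 by simp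
qed

lemma drop_props:
  assumes g: "gauss_code n G"
  shows "length (drop n G) = n" "\<forall>x\<in>set (drop n G). x \<noteq> 0 \<and> \<bar>x\<bar> \<le> int n"
  using g set_drop_subset[of n G] unfolding gauss_code_def by auto

lemma abs_distinct:
  assumes g: "gauss_code n G" and t: "take n G = std_half n"
  shows "distinct (map abs (drop n G)) \<and> set (map abs (drop n G)) \<subseteq> {1..int n}"
proof -
  have S: "set (map abs (drop n G)) \<subseteq> {1..int n}"
    using drop_props(2)[OF g] by force
  have "\<forall>y\<in>set (map abs (drop n G)). count_list (map abs (drop n G)) y \<le> 1"
  proof
    fix y assume y: "y \<in> set (map abs (drop n G))"
    with S have y1: "y \<ge> 1" "y \<le> int n" by auto
    define a where "a = nat y"
    have a: "a \<in> {1..n}" "int a = y" using y1 by (auto simp: a_def)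
    have c: "count_list (map abs (drop n G)) y = count_list (drop n G) y + count_list (drop n G) (-y)"
      using cnt_abs y1 by simp
    show "count_list (map abs (drop n G)) y \<le> 1"
      using drop_counts[OF g t a(1)] e_cases[of a] a(2) c by auto
  qed
  thus ?thesis using S cnt_le1_distinct by blast
qed

lemma product_gauss:
  assumes g1: "gauss_code n G1" and t1: "take n G1 = std_half n"
    and g2: "gauss_code n G2" and t2: "take n G2 = std_half n"
  shows "gauss_code n (gauss_product n G1 G2)"
proof -
  let ?P = "drop n G1 @ map uminus (drop n G2)"
  have A: "length ?P = 2 * n"
    using drop_props(1)[OF g1] drop_props(1)[OF g2] by simp
  have B: "\<forall>x \<in> set ?P. x \<noteq> 0 \<and> \<bar>x\<bar> \<le> int n"
    using drop_props(2)[OF g1] drop_props(2)[OF g2] by auto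
  have m: "count_list (map uminus xs) (y::int) = count_list xs (-y)" for xs y
    using count_list_map_conv[of uminus xs "-y"] by (simp add: inj_def)
  have C: "\<forall>i\<in>{1..n}. count_list ?P (int i) = 1 \<and> count_list ?P (- int i) = 1"
  proof
    fix i assume i: "i \<in> {1..n}"
    show "count_list ?P (int i) = 1 \<and> count_list ?P (- int i) = 1"
      using drop_counts[OF g1 t1 i] drop_counts[OF g2 t2 i] e_cases[of i]
      by (auto simp: m)
  qed
  show ?thesis using A B C unfolding gauss_code_def gauss_product_def by blast
qed

lemma relabel_gauss:
  assumes g: "gauss_code n P" and b: "bij_betw \<sigma> {1..n} {1..n}"
  shows "gauss_code n (relabel \<sigma> P)"
proof -
  define r where "r = (\<lambda>x::int. sgn x * int (\<sigma> (nat \<bar>x\<bar>)))"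
  have rel: "relabel \<sigma> P = map r P" by (simp add: relabel_def r_def)
  have Pin: "\<forall>x\<in>set P. x \<noteq> 0 \<and> \<bar>x\<bar> \<le> int n" using g by (simp add: gauss_code_def)
  have sig: "\<sigma> k \<in> {1..n}" if "k \<in> {1..n}" for k using b that by (auto simp: bij_betw_def)
  have rabs: "r x \<noteq> 0 \<and> \<bar>r x\<bar> = int (\<sigma> (nat \<bar>x\<bar>))" if "x \<noteq> 0" "\<bar>x\<bar> \<le> int n" for x
  proof -
    have "nat \<bar>x\<bar> \<in> {1..n}" using that by auto
    hence "\<sigma> (nat \<bar>x\<bar>) \<ge> 1" using sig by auto
    thus ?thesis using that by (auto simp: r_def abs_mult abs_sgn_eq sgn_0_0)
  qed
  have inj: "inj_on r (set P)"
  proof (rule inj_onI)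
    fix x y assume x: "x \<in> set P" and y: "y \<in> set P" and e: "r x = r y"
    have xx: "x \<noteq> 0" "\<bar>x\<bar> \<le> int n" and yy: "y \<noteq> 0" "\<bar>y\<bar> \<le> int n" using x y Pin by auto
    have "\<sigma> (nat \<bar>x\<bar>) = \<sigma> (nat \<bar>y\<bar>)" using rabs[OF xx] rabs[OF yy] e by simp
    moreover have m1: "nat \<bar>x\<bar> \<in> {1..n}" and m2: "nat \<bar>y\<bar> \<in> {1..n}" using xx yy by auto
    moreover have ij: "inj_on \<sigma> {1..n}" using b by (simp add: bij_betw_def)
    ultimately have "nat \<bar>x\<bar> = nat \<bar>y\<bar>" using inj_onD[OF ij _ m1 m2] by blast
    hence ab: "\<bar>x\<bar> = \<bar>y\<bar>" by simp
    have "\<sigma> (nat \<bar>x\<bar>) \<ge> 1" using sig \<open>nat \<bar>x\<bar> \<in> {1..n}\<close> by auto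
    moreover have "sgn x * int (\<sigma> (nat \<bar>x\<bar>)) = sgn y * int (\<sigma> (nat \<bar>x\<bar>))"
      using e ab by (simp add: r_def)
    ultimately have "sgn x = sgn y" by simp
    have "x = sgn x * \<bar>x\<bar>" by (rule sgn_mult_abs[symmetric])
    also have "\<dots> = sgn y * \<bar>y\<bar>" by (simp only: \<open>sgn x = sgn y\<close> ab)
    also have "\<dots> = y" by (rule sgn_mult_abs)
    finally show "x = y" .
  qed
  have A: "length (map r P) = 2 * n" using g by (simp add: gauss_code_def)
  have B: "\<forall>x\<in>set (map r P). x \<noteq> 0 \<and> \<bar>x\<bar> \<le> int n"
  proof
    fix x assume "x \<in> set (map r P)"
    then obtain y where y: "y \<in> set P" "x = r y" by auto
    have yy: "y \<noteq> 0" "\<bar>y\<bar> \<le> int n" using y Pin by auto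
    have "nat \<bar>y\<bar> \<in> {1..n}" using yy by auto
    hence "\<sigma> (nat \<bar>y\<bar>) \<le> n" using sig by auto
    thus "x \<noteq> 0 \<and> \<bar>x\<bar> \<le> int n" using rabs[OF yy] y by simp
  qed
  have C: "\<forall>i\<in>{1..n}. count_list (map r P) (int i) = 1 \<and> count_list (map r P) (- int i) = 1"
  proof
    fix i assume i: "i \<in> {1..n}"
    define j where "j = inv_into {1..n} \<sigma> i"
    have ii: "i \<in> \<sigma> ` {1..n}" using b i by (simp add: bij_betw_def)
    have j1: "j \<in> {1..n}" unfolding j_def using ii by (rule inv_into_into)
    have j2: "\<sigma> j = i" unfolding j_def using ii by (rule f_inv_into_f)
    note j = j1 j2
    have r1: "r (int j) = int i" "r (- int j) = - int i" using j by (auto simp: r_def)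
    have c: "count_list P (int j) = 1" "count_list P (- int j) = 1"
      using g j unfolding gauss_code_def by blast+
    hence mem: "int j \<in> set P" "- int j \<in> set P" by (metis count_notin one_neq_zero)+
    show "count_list (map r P) (int i) = 1 \<and> count_list (map r P) (- int i) = 1"
      using count_list_inj_map[OF inj mem(1)] count_list_inj_map[OF inj mem(2)] c r1 by simp
  qed
  show ?thesis unfolding rel gauss_code_def using A B C by blast
qed

theorem theorem4:
  fixes n :: nat and G1 G2 :: "int list"
  assumes "n \<ge> 1"
    and "ordered_gauss_code n G1" and "alternating_code G1"
    and "ordered_gauss_code n G2" and "alternating_code G2"
    and "take n G1 = std_half n" and "take n G2 = std_half n"
  shows "distinct (map abs (take n (gauss_product n G1 G2)))
         \<and> set (map abs (take n (gauss_product n G1 G2))) \<subseteq> {1..int n}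
         \<and> (\<exists>\<sigma>. bij_betw \<sigma> {1..n} {1..n}
               \<and> ordered_gauss_code n (relabel \<sigma> (gauss_product n G1 G2)))"
proof -
  have g1: "gauss_code n G1" and g2: "gauss_code n G2"
    using assms by (auto simp: ordered_gauss_code_def)
  note t1 = assms(6) and t2 = assms(7)
  define D where "D = drop n G1"
  have lD: "length D = n" using drop_props(1)[OF g1] by (simp add: D_def)
  have tk: "take n (gauss_product n G1 G2) = D"
    using lD by (simp add: gauss_product_def D_def)
  have AD: "distinct (map abs D) \<and> set (map abs D) \<subseteq> {1..int n}"
    using abs_distinct[OF g1 t1] by (simp add: D_def)
  define \<tau> where "\<tau> = (\<lambda>k. nat \<bar>D ! (k - 1)\<bar>)"
  have tin: "\<tau> k \<in> {1..n}" if "k \<in> {1..n}" for k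
  proof -
    have "D ! (k-1) \<in> set D" using that lD by auto
    hence "\<bar>D ! (k-1)\<bar> \<in> {1..int n}" using AD by auto
    thus ?thesis by (auto simp: \<tau>_def)
  qed
  have tinj: "inj_on \<tau> {1..n}"
  proof (rule inj_onI)
    fix x y assume x: "x \<in> {1..n}" and y: "y \<in> {1..n}" and e: "\<tau> x = \<tau> y"
    have "\<bar>D ! (x-1)\<bar> = \<bar>D ! (y-1)\<bar>" using e unfolding \<tau>_def by (simp add: nat_eq_iff)
    moreover have "x - 1 < length D" "y - 1 < length D" using x y lD by auto
    ultimately have "(map abs D) ! (x-1) = (map abs D) ! (y-1)" by simp
    hence "x - 1 = y - 1" using AD x y lD nth_eq_iff_index_eq[of "map abs D"] by auto
    thus "x = y" using x y by auto
  qed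
  have "\<tau> ` {1..n} = {1..n}"
    using tin tinj by (metis card_image card_subset_eq finite_atLeastAtMost image_subsetI)
  hence tb: "bij_betw \<tau> {1..n} {1..n}" using tinj by (simp add: bij_betw_def)
  define \<sigma> where "\<sigma> = inv_into {1..n} \<tau>"
  have sb: "bij_betw \<sigma> {1..n} {1..n}" unfolding \<sigma>_def using bij_betw_inv_into[OF tb] .
  have sval: "\<sigma> (nat \<bar>D ! k\<bar>) = k + 1" if "k < n" for k
  proof -
    have "\<tau> (k+1) = nat \<bar>D ! k\<bar>" by (simp add: \<tau>_def)
    moreover have "k + 1 \<in> {1..n}" using that by auto
    ultimately have "inv_into {1..n} \<tau> (\<tau> (k+1)) = k+1" using inv_into_f_f[OF tinj] by blast
    thus ?thesis using \<open>\<tau> (k+1) = nat \<bar>D ! k\<bar>\<close> by (simp add: \<sigma>_def)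
  qed
  have PG: "gauss_code n (gauss_product n G1 G2)" using product_gauss[OF g1 t1 g2 t2] .
  have Dnz: "D ! k \<noteq> 0" if "k < n" for k
  proof -
    have "D ! k \<in> set D" using lD that by simp
    thus ?thesis using drop_props(2)[OF g1] by (simp add: D_def)
  qed
  have ord: "map abs (take n (relabel \<sigma> (gauss_product n G1 G2))) = map int [1..<n+1]"
  proof -
    have "take n (relabel \<sigma> (gauss_product n G1 G2)) = relabel \<sigma> D"
      using tk by (simp add: relabel_def take_map)
    moreover have "map abs (relabel \<sigma> D) = map int [1..<n+1]"
    proof (rule nth_equalityI)
      show "length (map abs (relabel \<sigma> D)) = length (map int [1..<n+1])"
        using lD by (simp add: relabel_def)
    next
      fix k assume "k < length (map abs (relabel \<sigma> D))"
      hence k: "k < n" using lD by (simp add: relabel_def)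
      show "map abs (relabel \<sigma> D) ! k = map int [1..<n+1] ! k"
        using k lD sval[OF k] Dnz[OF k] by (simp add: relabel_def abs_mult abs_sgn_eq nth_upt del: upt_Suc)
    qed
    ultimately show ?thesis by simp
  qed
  show ?thesis
    using AD tk sb relabel_gauss[OF PG sb] ord by (auto simp: ordered_gauss_code_def)
qed

end
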